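(* Let $S$ and $T$ be multisets with no element in common, and let $\pi$ be a multiset partition of $S$ and $\tau$ a multiset partition of $T$. Then \[ \tilde h_{\tilde m(\pi)}\,\tilde h_{\tilde m(\tau)}=\sum_{\theta\in\pi\#\tau}\tilde h_{\tilde m(\theta)}. \]
   Context: A multiset partition of a multiset $S$ is a multiset of nonempty multisets whose multiset union is $S$; for such $\pi$, $\tilde m(\pi)$ is the partition whose parts are the multiplicities of the distinct multisets in $\pi$. For a multiset $A$ and set $U$, $A|_U$ is the multiset of elements of $A$ lying in $U$; for a multiset partition $\theta$, $\theta|_U$ is the multiset of the $A|_U$, $A\in\theta$, with empty multisets discarded. $\pi\#\tau$ is the set of multiset partitions $\theta$ of $S\uplus T$ with $\theta|_S=\pi$ and $\theta|_T=\tau$ (restricting to the underlying sets of $S$ and $T$). $Sym=\mathbb{Q}[p_1,p_2,\ldots]$; the induced trivial character basis $\{\tilde h_\lambda\}$ is determined recursively by $h_\lambda=\sum_\sigma\tilde h_{\tilde m(\sigma)}$, the sum over all multiset partitions $\sigma$ of $\{\!\!\{1^{\lambda_1},\ldots,\ell(\lambda)^{\lambda_{\ell(\lambda)}}\}\!\!\}$. *)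

theory Defs
  imports Complex_Main "HOL-Library.Multiset" "HOL-Library.Poly_Mapping"
begin

text \<open>Polynomials in countably many variables over the rationals: finitely supported
  maps from monomials (finitely supported exponent vectors) to coefficients.
  The variable with index i (i >= 1) is the power sum p_i; index 0 is never used.\<close>

type_synonym sym = "(nat \<Rightarrow>\<^sub>0 nat) \<Rightarrow>\<^sub>0 rat"

definition psym :: "nat \<Rightarrow> sym" where
  "psym i = Poly_Mapping.single (Poly_Mapping.single i 1) 1"

definition is_partition :: "nat multiset \<Rightarrow> bool" where
  "is_partition lam \<longleftrightarrow> (\<forall>i\<in>#lam. 0 < i)"

definition partitions_of :: "nat \<Rightarrow> nat multiset set" where
  "partitions_of n = {\<mu>. is_partition \<mu> \<and> sum_mset \<mu> = n}"

definition zee :: "nat multiset \<Rightarrow> nat" where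
  "zee \<mu> = (\<Prod>i\<in>set_mset \<mu>. i ^ count \<mu> i * fact (count \<mu> i))"

definition p_part :: "nat multiset \<Rightarrow> sym" where
  "p_part \<mu> = (\<Prod>i\<in>#\<mu>. psym i)"

definition hsym :: "nat \<Rightarrow> sym" where
  "hsym n = (\<Sum>\<mu>\<in>partitions_of n. Poly_Mapping.single 0 (1 / of_nat (zee \<mu>)) * p_part \<mu>)"

definition h_part :: "nat multiset \<Rightarrow> sym" where
  "h_part lam = (\<Prod>i\<in>#lam. hsym i)"

definition is_mset_partition :: "'a multiset multiset \<Rightarrow> 'a multiset \<Rightarrow> bool" where
  "is_mset_partition \<sigma> S \<longleftrightarrow> (\<forall>A\<in>#\<sigma>. A \<noteq> {#}) \<and> sum_mset \<sigma> = S"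

definition mset_partitions :: "'a multiset \<Rightarrow> 'a multiset multiset set" where
  "mset_partitions S = {\<sigma>. is_mset_partition \<sigma> S}"

definition mtilde :: "'a multiset multiset \<Rightarrow> nat multiset" where
  "mtilde \<sigma> = image_mset (\<lambda>A. count \<sigma> A) (mset_set (set_mset \<sigma>))"

definition restr :: "'a multiset \<Rightarrow> 'a set \<Rightarrow> 'a multiset" where
  "restr A U = filter_mset (\<lambda>x. x \<in> U) A"

definition restr_part :: "'a multiset multiset \<Rightarrow> 'a set \<Rightarrow> 'a multiset multiset" where
  "restr_part \<theta> U = filter_mset (\<lambda>B. B \<noteq> {#}) (image_mset (\<lambda>A. restr A U) \<theta>)"

definition sharp :: "'a multiset \<Rightarrow> 'a multiset \<Rightarrow> 'a multiset multiset \<Rightarrow> 'a multiset multiset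
    \<Rightarrow> 'a multiset multiset set" where
  "sharp S T \<pi> \<tau> = {\<theta>. is_mset_partition \<theta> (S + T)
       \<and> restr_part \<theta> (set_mset S) = \<pi> \<and> restr_part \<theta> (set_mset T) = \<tau>}"

text \<open>For a partition lambda (with parts listed in some order as lambda_1, ..., lambda_l),
  the multiset {1^lambda_1, ..., l^lambda_l}.  Labels start at 0 here; relabelling is immaterial.\<close>

definition base_mset :: "nat multiset \<Rightarrow> nat multiset" where
  "base_mset lam = (let xs = sorted_list_of_multiset lam in
      (\<Sum>i<length xs. replicate_mset (xs ! i) i))"

text \<open>ht is (a candidate for) the basis h-tilde: it satisfies the defining relations
  h_lambda = sum over multiset partitions sigma of base(lambda) of ht(m-tilde sigma),
  for every partition lambda.  These relations determine ht on partitions.\<close>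

definition is_htilde :: "(nat multiset \<Rightarrow> sym) \<Rightarrow> bool" where
  "is_htilde ht \<longleftrightarrow> (\<forall>lam. is_partition lam \<longrightarrow>
      h_part lam = (\<Sum>\<sigma>\<in>mset_partitions (base_mset lam). ht (mtilde \<sigma>)))"

end

theory Submission
  imports Defs "HOL-Library.Countable_Set"
begin


lemma count_image_inj:
  assumes "inj_on f (set_mset M)" "x \<in># M"
  shows "count (image_mset f M) (f x) = count M x"
proof -
  have "f -` {f x} \<inter> set_mset M = {x}" using assms by (auto dest: inj_onD)
  thus ?thesis by (simp add: count_image_mset)
qed

lemma mtilde_image:
  assumes "inj_on f (set_mset \<sigma>)"
  shows "mtilde (image_mset f \<sigma>) = mtilde \<sigma>"
proof -
  have "mtilde (image_mset f \<sigma>) = image_mset (\<lambda>A. count (image_mset f \<sigma>) A) (mset_set (f ` set_mset \<sigma>))"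
    by (simp add: mtilde_def)
  also have "mset_set (f ` set_mset \<sigma>) = image_mset f (mset_set (set_mset \<sigma>))"
    using assms by (simp add: image_mset_mset_set)
  also have "image_mset (\<lambda>A. count (image_mset f \<sigma>) A) (image_mset f (mset_set (set_mset \<sigma>)))
      = image_mset (\<lambda>A. count \<sigma> A) (mset_set (set_mset \<sigma>))"
    by (auto simp: multiset.map_comp intro!: image_mset_cong count_image_inj[OF assms])
  finally show ?thesis by (simp add: mtilde_def)
qed

lemma finite_bounded_msets:
  assumes "finite A" shows "finite {M. set_mset M \<subseteq> A \<and> size M \<le> n}"
proof -
  have "{M. set_mset M \<subseteq> A \<and> size M \<le> n} = (\<Union>k\<le>n. multisets_of_size A k)"
    by (auto simp: multisets_of_size_def)
  thus ?thesis using assms by auto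
qed

lemma size_le_sum_size:
  assumes "\<forall>A\<in>#\<sigma>. A \<noteq> {#}" shows "size \<sigma> \<le> size (sum_mset \<sigma>)"
  using assms
proof (induction \<sigma>)
  case (add x \<sigma>) thus ?case by (cases x) auto
qed simp

lemma finite_mset_partitions: "finite (mset_partitions X)"
proof -
  let ?B = "{M. set_mset M \<subseteq> set_mset X \<and> size M \<le> size X}"
  have fB: "finite ?B" by (rule finite_bounded_msets) simp
  have "mset_partitions X \<subseteq> {M. set_mset M \<subseteq> ?B \<and> size M \<le> size X}"
  proof
    fix \<sigma> assume "\<sigma> \<in> mset_partitions X"
    hence ne: "\<forall>A\<in>#\<sigma>. A \<noteq> {#}" and s: "sum_mset \<sigma> = X" by (auto simp: mset_partitions_def is_mset_partition_def)
    have "A \<subseteq># X" if "A \<in># \<sigma>" for A using that s by (metis mset_subset_eq_add_left sum_mset.remove)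
    hence "set_mset \<sigma> \<subseteq> ?B" by (fastforce dest: set_mset_mono size_mset_mono)
    moreover have "size \<sigma> \<le> size X" using size_le_sum_size[OF ne] s by simp
    ultimately show "\<sigma> \<in> {M. set_mset M \<subseteq> ?B \<and> size M \<le> size X}" by simp
  qed
  moreover have "finite {M. set_mset M \<subseteq> ?B \<and> size M \<le> size X}" by (rule finite_bounded_msets[OF fB])
  ultimately show ?thesis by (rule finite_subset)
qed



lemma image_sum_mset_image: "image_mset g (sum_mset \<sigma>) = sum_mset (image_mset (image_mset g) \<sigma>)"
  by (induction \<sigma>) auto

lemma mp_relabel_into:
  assumes "\<sigma> \<in> mset_partitions X"
  shows "image_mset (image_mset g) \<sigma> \<in> mset_partitions (image_mset g X)"
  using assms by (auto simp: mset_partitions_def is_mset_partition_def image_sum_mset_image[symmetric])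

lemma block_subset: "\<sigma> \<in> mset_partitions X \<Longrightarrow> A \<in># \<sigma> \<Longrightarrow> set_mset A \<subseteq> set_mset X"
  by (auto simp: mset_partitions_def is_mset_partition_def)

lemma image_inv_into_mset:
  assumes "inj_on g U" "set_mset A \<subseteq> U"
  shows "image_mset (inv_into U g) (image_mset g A) = A"
proof -
  have "image_mset (inv_into U g) (image_mset g A) = image_mset id A"
    unfolding multiset.map_comp by (rule image_mset_cong) (use assms in auto)
  thus ?thesis by simp
qed

lemma image_into_inv_mset:
  assumes "set_mset A \<subseteq> g ` U"
  shows "image_mset g (image_mset (inv_into U g) A) = A"
proof -
  have "image_mset g (image_mset (inv_into U g) A) = image_mset id A"
    unfolding multiset.map_comp by (rule image_mset_cong) (use assms in \<open>auto simp: f_inv_into_f\<close>)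
  thus ?thesis by simp
qed

lemma F_relabel:
  assumes "inj_on g (set_mset X)"
  shows "(\<Sum>\<sigma>\<in>mset_partitions (image_mset g X). ht (mtilde \<sigma>)) = (\<Sum>\<sigma>\<in>mset_partitions X. ht (mtilde \<sigma>))"
proof -
  let ?U = "set_mset X"
  let ?f = "image_mset (image_mset g)"
  let ?h = "image_mset (image_mset (inv_into ?U g))"
  have hf: "?h (?f \<sigma>) = \<sigma>" if "\<sigma> \<in> mset_partitions X" for \<sigma>
  proof -
    have "?h (?f \<sigma>) = image_mset id \<sigma>" unfolding multiset.map_comp
      by (rule image_mset_cong) (use that assms in \<open>auto intro!: image_inv_into_mset dest: block_subset\<close>)
    thus ?thesis by simp
  qed
  have fh: "?f (?h \<sigma>) = \<sigma>" if "\<sigma> \<in> mset_partitions (image_mset g X)" for \<sigma>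
  proof -
    have "?f (?h \<sigma>) = image_mset id \<sigma>" unfolding multiset.map_comp
      by (rule image_mset_cong) (use that assms block_subset[OF that] in \<open>auto intro!: image_into_inv_mset\<close>)
    thus ?thesis by simp
  qed
  have h_into: "?h \<sigma> \<in> mset_partitions X" if "\<sigma> \<in> mset_partitions (image_mset g X)" for \<sigma>
    using mp_relabel_into[OF that, of "inv_into ?U g"] image_inv_into_mset[OF assms, of X] by simp
  have bij: "bij_betw ?f (mset_partitions X) (mset_partitions (image_mset g X))"
    by (rule bij_betw_byWitness[where f'="?h"]) (use hf fh h_into mp_relabel_into in auto)
  have mt: "mtilde (?f \<sigma>) = mtilde \<sigma>" if "\<sigma> \<in> mset_partitions X" for \<sigma>
  proof (rule mtilde_image, rule inj_onI)
    fix A B assume "A \<in># \<sigma>" "B \<in># \<sigma>" "image_mset g A = image_mset g B"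
    thus "A = B" using image_inv_into_mset[OF assms] that by (metis block_subset)
  qed
  show ?thesis
    by (rule sum.reindex_bij_betw[OF bij, symmetric, THEN trans]) (simp add: mt)
qed



definition mults :: "'a multiset \<Rightarrow> nat multiset" where
  "mults X = image_mset (count X) (mset_set (set_mset X))"

lemma mults_partition: "is_partition (mults X)"
  by (auto simp: mults_def is_partition_def)

lemma mults_add:
  assumes "set_mset A \<inter> set_mset B = {}"
  shows "mults (A + B) = mults A + mults B"
proof -
  have "mset_set (set_mset (A + B)) = mset_set (set_mset A) + mset_set (set_mset B)"
    using assms by (simp add: mset_set_Union)
  moreover have "image_mset (count (A+B)) (mset_set (set_mset A)) = image_mset (count A) (mset_set (set_mset A))"
    by (rule image_mset_cong) (use assms in \<open>auto simp: count_eq_zero_iff\<close>)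
  moreover have "image_mset (count (A+B)) (mset_set (set_mset B)) = image_mset (count B) (mset_set (set_mset B))"
    by (rule image_mset_cong) (use assms in \<open>auto simp: count_eq_zero_iff\<close>)
  ultimately show ?thesis by (simp add: mults_def)
qed

lemma relabel_base:
  fixes X :: "nat multiset"
  obtains g where "inj_on g (set_mset X)" "image_mset g X = base_mset (mults X)"
proof -
  define zs where "zs = sorted_list_of_set (set_mset X)"
  define ys where "ys = sort_key (count X) zs"
  define g where "g = inv_into {..<length ys} ((!) ys)"
  have dys: "distinct ys" and sys: "set ys = set_mset X" by (simp_all add: ys_def zs_def)
  have mz: "mset zs = mset_set (set_mset X)" by (simp add: zs_def mset_set_set[symmetric])
  have xs: "sorted_list_of_multiset (mults X) = map (count X) ys"
  proof -
    have "mults X = mset (map (count X) zs)" by (simp add: mults_def mz)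
    hence "sorted_list_of_multiset (mults X) = sort (map (count X) zs)" by (metis sorted_list_of_multiset_mset)
    also have "\<dots> = map (count X) ys"
      by (rule properties_for_sort) (simp_all add: ys_def)
    finally show ?thesis .
  qed
  have bij: "bij_betw ((!) ys) {..<length ys} (set ys)"
    using dys by (simp add: bij_betw_nth)
  have g_inj: "inj_on g (set_mset X)" unfolding g_def sys[symmetric]
    by (rule inj_on_inv_into) (use bij in \<open>simp add: bij_betw_def\<close>)
  have g_nth: "g (ys ! i) = i" if "i < length ys" for i
    unfolding g_def using bij that by (simp add: bij_betw_def inv_into_f_f)
  have "image_mset g X = base_mset (mults X)"
  proof (rule multiset_eqI)
    fix i
    have cb: "count (base_mset (mults X)) i = (if i < length ys then count X (ys ! i) else 0)"
      by (simp add: base_mset_def xs count_sum)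
    show "count (image_mset g X) i = count (base_mset (mults X)) i"
    proof (cases "i < length ys")
      case True
      have "g -` {i} \<inter> set_mset X = {ys ! i}"
      proof
        show "g -` {i} \<inter> set_mset X \<subseteq> {ys ! i}"
        proof
          fix y assume "y \<in> g -` {i} \<inter> set_mset X"
          hence "y \<in> set ys" "g y = i" using sys by auto
          then obtain j where "j < length ys" "y = ys ! j" by (auto simp: in_set_conv_nth)
          thus "y \<in> {ys ! i}" using g_nth \<open>g y = i\<close> by auto
        qed
        show "{ys ! i} \<subseteq> g -` {i} \<inter> set_mset X" using True g_nth sys nth_mem by auto
      qed
      thus ?thesis using True cb by (simp add: count_image_mset)
    next
      case False
      have "g -` {i} \<inter> set_mset X = {}"
      proof (rule ccontr)
        assume "g -` {i} \<inter> set_mset X \<noteq> {}"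
        then obtain y where "y \<in> set_mset X" "g y = i" by auto
        hence "y \<in> set ys" using sys by auto
        then obtain j where "j < length ys" "y = ys ! j" by (auto simp: in_set_conv_nth)
        thus False using g_nth False \<open>g y = i\<close> by auto
      qed
      thus ?thesis using False cb by (simp add: count_image_mset)
    qed
  qed
  with g_inj that show ?thesis by blast
qed

definition F :: "(nat multiset \<Rightarrow> sym) \<Rightarrow> 'a multiset \<Rightarrow> sym" where
  "F ht X = (\<Sum>\<sigma>\<in>mset_partitions X. ht (mtilde \<sigma>))"

lemma F_mults:
  fixes X :: "nat multiset"
  assumes "is_htilde ht"
  shows "F ht X = h_part (mults X)"
proof -
  obtain g where g: "inj_on g (set_mset X)" "image_mset g X = base_mset (mults X)" by (rule relabel_base)
  have "F ht X = F ht (image_mset g X)" unfolding F_def by (rule F_relabel[OF g(1), symmetric])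
  also have "\<dots> = h_part (mults X)" using assms mults_partition[of X] by (simp add: F_def is_htilde_def g(2))
  finally show ?thesis .
qed

lemma F_add:
  fixes A B :: "nat multiset"
  assumes "is_htilde ht" "set_mset A \<inter> set_mset B = {}"
  shows "F ht (A + B) = F ht A * F ht B"
  using assms by (simp add: F_mults mults_add h_part_def)



lemma sum_filter_nonempty: "sum_mset (filter_mset (\<lambda>B. B \<noteq> {#}) M) = sum_mset (M :: 'a multiset multiset)"
  by (induction M) auto

lemma sum_restr_part: "sum_mset (restr_part \<theta> U) = restr (sum_mset \<theta>) U"
  unfolding restr_part_def sum_filter_nonempty restr_def by (induction \<theta>) auto

lemma restr_disj:
  assumes "set_mset A \<inter> set_mset B = {}"
  shows "restr (A + B) (set_mset A) = A" "restr (A + B) (set_mset B) = B"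
proof -
  have "filter_mset (\<lambda>x. x \<in> set_mset A) B = {#}" "filter_mset (\<lambda>x. x \<in> set_mset B) A = {#}"
    "filter_mset (\<lambda>x. x \<in> set_mset A) A = A" "filter_mset (\<lambda>x. x \<in> set_mset B) B = B"
    using assms by (auto simp: filter_mset_eq_conv)
  thus "restr (A + B) (set_mset A) = A" "restr (A + B) (set_mset B) = B"
    by (simp_all add: restr_def)
qed

lemma restr_part_mp:
  assumes "set_mset A \<inter> set_mset B = {}" "\<zeta> \<in> mset_partitions (A + B)"
  shows "restr_part \<zeta> (set_mset A) \<in> mset_partitions A" "restr_part \<zeta> (set_mset B) \<in> mset_partitions B"
  using assms sum_restr_part[of \<zeta>] restr_disj[OF assms(1)]
  by (auto simp: mset_partitions_def is_mset_partition_def restr_part_def)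

lemma F_decomp:
  assumes "set_mset A \<inter> set_mset B = {}"
  shows "F ht (A + B) = (\<Sum>p\<in>mset_partitions A \<times> mset_partitions B.
            \<Sum>\<zeta>\<in>sharp A B (fst p) (snd p). ht (mtilde \<zeta>))"
proof -
  let ?g = "\<lambda>\<zeta>. (restr_part \<zeta> (set_mset A), restr_part \<zeta> (set_mset B))"
  have "F ht (A + B) = (\<Sum>p\<in>mset_partitions A \<times> mset_partitions B.
          \<Sum>\<zeta>\<in>{\<zeta>. \<zeta> \<in> mset_partitions (A + B) \<and> ?g \<zeta> = p}. ht (mtilde \<zeta>))"
    unfolding F_def
    by (rule sum.group[symmetric]) (use restr_part_mp[OF assms] in \<open>auto simp: finite_mset_partitions\<close>)
  also have "\<dots> = (\<Sum>p\<in>mset_partitions A \<times> mset_partitions B.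
            \<Sum>\<zeta>\<in>sharp A B (fst p) (snd p). ht (mtilde \<zeta>))"
    by (rule sum.cong[OF refl], rule sum.cong)
       (auto simp: sharp_def mset_partitions_def)
  finally show ?thesis .
qed

lemma F_prod:
  "F ht A * F ht B = (\<Sum>p\<in>mset_partitions A \<times> mset_partitions B. ht (mtilde (fst p)) * ht (mtilde (snd p)))"
  unfolding F_def sum_product sum.cartesian_product by (simp add: case_prod_beta)

definition sing :: "'a multiset \<Rightarrow> 'a multiset multiset" where
  "sing A = image_mset (\<lambda>x. {#x#}) A"

lemma sing_mp: "sing A \<in> mset_partitions A"
  by (simp add: sing_def mset_partitions_def is_mset_partition_def)

lemma single_the_elem: "size x = Suc 0 \<Longrightarrow> {#the_elem (set_mset x)#} = x"
  by (metis One_nat_def size_1_singleton_mset set_mset_single the_elem_eq)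

lemma size_mp:
  assumes "\<rho> \<in> mset_partitions A"
  shows "size \<rho> \<le> size A" "size \<rho> = size A \<Longrightarrow> \<rho> = sing A"
proof -
  have ne: "\<forall>B\<in>#\<rho>. B \<noteq> {#}" and s: "sum_mset \<rho> = A"
    using assms by (auto simp: mset_partitions_def is_mset_partition_def)
  show "size \<rho> \<le> size A" using size_le_sum_size[OF ne] s by simp
  assume eq: "size \<rho> = size A"
  have "\<forall>B\<in>#\<rho>. size B = 1"
  proof (rule ccontr)
    assume "\<not> (\<forall>B\<in>#\<rho>. size B = 1)"
    then obtain B where B: "B \<in># \<rho>" "size B \<noteq> 1" by blast
    have "size B \<noteq> 0" using ne B by auto
    hence "size B \<ge> 2" using B by linarith
    obtain \<rho>' where r: "\<rho> = add_mset B \<rho>'" using B by (metis multi_member_split)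
    have ne': "\<forall>B\<in>#\<rho>'. B \<noteq> {#}" using ne r by auto
    have "size A = size B + size (sum_mset \<rho>')" using s[symmetric] r by simp
    moreover have "size \<rho>' \<le> size (sum_mset \<rho>')" by (rule size_le_sum_size[OF ne'])
    ultimately show False using eq r \<open>size B \<ge> 2\<close> by simp
  qed
  hence "\<rho> = image_mset (\<lambda>B. {#the_elem (set_mset B)#}) \<rho>"
    by (subst image_mset_cong[where g=id]) (auto intro: single_the_elem)
  also have "\<dots> = sing (sum_mset (image_mset (\<lambda>B. {#the_elem (set_mset B)#}) \<rho>))"
    by (simp add: sing_def multiset.map_comp comp_def)
  finally show "\<rho> = sing A" using s by (metis Union_image_single_mset sing_def)
qed



lemma restr_add[simp]: "restr (X + Y) U = restr X U + restr Y U"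
  by (simp add: restr_def)
lemma restr_empty[simp]: "restr {#} U = {#}"
  by (simp add: restr_def)
lemma restr_add_mset: "restr (add_mset x Z) U = (if x \<in> U then add_mset x (restr Z U) else restr Z U)"
  by (simp add: restr_def)
lemma restr_id: "set_mset X \<subseteq> U \<Longrightarrow> restr X U = X"
  by (auto simp: restr_def filter_mset_eq_conv)
lemma restr_none: "set_mset X \<inter> U = {} \<Longrightarrow> restr X U = {#}"
  by (auto simp: restr_def filter_mset_eq_conv)
lemma restr_split:
  assumes "set_mset Z \<subseteq> U1 \<union> U2" "U1 \<inter> U2 = {}"
  shows "Z = restr Z U1 + restr Z U2"
proof -
  have "restr Z U2 = filter_mset (\<lambda>x. \<not> x \<in> U1) Z"
    unfolding restr_def by (rule filter_mset_cong) (use assms in auto)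
  thus ?thesis unfolding restr_def by simp
qed
lemma restr_subset: "set_mset (restr Z U) \<subseteq> U"
  by (auto simp: restr_def)

lemma block_le:
  assumes "\<sigma> \<in> mset_partitions X" "A \<in># \<sigma>" shows "A \<subseteq># X"
proof -
  have "sum_mset \<sigma> = A + sum_mset (\<sigma> - {#A#})" using assms(2) by (rule sum_mset.remove)
  hence "A \<subseteq># sum_mset \<sigma>" by (metis mset_subset_eq_add_left)
  thus ?thesis using assms(1) by (simp add: mset_partitions_def is_mset_partition_def)
qed

lemma block_ne: "\<sigma> \<in> mset_partitions X \<Longrightarrow> A \<in># \<sigma> \<Longrightarrow> A \<noteq> {#}"
  by (auto simp: mset_partitions_def is_mset_partition_def)

lemma sharp_mp: "\<theta> \<in> sharp S T \<pi> \<tau> \<Longrightarrow> \<theta> \<in> mset_partitions (S + T)"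
  by (simp add: sharp_def mset_partitions_def)

lemma restr_part_mem:
  assumes "restr_part \<theta> U = \<pi>" "C \<in># \<theta>" "restr C U \<noteq> {#}"
  shows "restr C U \<in># \<pi>"
  using assms by (auto simp: restr_part_def)

locale flat =
  fixes S T :: "'a multiset" and \<pi> \<tau> :: "'a multiset multiset" and c :: "'a multiset \<Rightarrow> nat"
  assumes disj: "set_mset S \<inter> set_mset T = {}"
    and pS: "\<pi> \<in> mset_partitions S" and pT: "\<tau> \<in> mset_partitions T"
    and cinj: "inj_on c (set_mset \<pi> \<union> set_mset \<tau>)"
begin

definition "d = inv_into (set_mset \<pi> \<union> set_mset \<tau>) c"
abbreviation "A \<equiv> image_mset c \<pi>"
abbreviation "B \<equiv> image_mset c \<tau>"
definition "blk Z = sum_mset (image_mset d Z)"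
definition "oneS C = (if restr C (set_mset S) = {#} then {#} else {#c (restr C (set_mset S))#})"
definition "oneT C = (if restr C (set_mset T) = {#} then {#} else {#c (restr C (set_mset T))#})"
definition "unb C = oneS C + oneT C"

lemma blk_add[simp]: "blk (X + Y) = blk X + blk Y" and blk_empty[simp]: "blk {#} = {#}"
  and blk_single[simp]: "blk {#x#} = d x" and blk_add_mset[simp]: "blk (add_mset x Z) = d x + blk Z"
  by (simp_all add: blk_def)

lemma f1: "X \<in># \<pi> \<Longrightarrow> X \<noteq> {#} \<and> set_mset X \<subseteq> set_mset S"
  using pS by (auto dest: block_ne block_subset)
lemma f1': "X \<in># \<tau> \<Longrightarrow> X \<noteq> {#} \<and> set_mset X \<subseteq> set_mset T"
  using pT by (auto dest: block_ne block_subset)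
lemma f2: "set_mset \<pi> \<inter> set_mset \<tau> = {}"
proof (rule ccontr)
  assume "set_mset \<pi> \<inter> set_mset \<tau> \<noteq> {}"
  then obtain X where "X \<in># \<pi>" "X \<in># \<tau>" by auto
  hence "X \<noteq> {#}" "set_mset X \<subseteq> set_mset S" "set_mset X \<subseteq> set_mset T" using f1 f1' by blast+
  then obtain x where "x \<in># X" by blast
  thus False using \<open>set_mset X \<subseteq> set_mset S\<close> \<open>set_mset X \<subseteq> set_mset T\<close> disj by blast
qed
lemma f3: "X \<in> set_mset \<pi> \<union> set_mset \<tau> \<Longrightarrow> d (c X) = X"
  unfolding d_def using cinj by (simp add: inv_into_f_f)
lemma f4: "a \<in># A \<Longrightarrow> d a \<in># \<pi> \<and> c (d a) = a"
  using f3 by auto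
lemma f4': "a \<in># B \<Longrightarrow> d a \<in># \<tau> \<and> c (d a) = a"
  using f3 by auto
lemma f5: "set_mset A \<inter> set_mset B = {}"
proof (rule ccontr)
  assume "set_mset A \<inter> set_mset B \<noteq> {}"
  then obtain X Y where "X \<in># \<pi>" "Y \<in># \<tau>" "c X = c Y" by auto
  hence "X = Y" using cinj by (auto dest: inj_onD)
  thus False using f2 \<open>X \<in># \<pi>\<close> \<open>Y \<in># \<tau>\<close> by auto
qed

lemma K2:
  assumes "set_mset Z \<subseteq> set_mset A \<union> set_mset B"
  shows "restr (blk Z) (set_mset S) = blk (restr Z (set_mset A))
       \<and> restr (blk Z) (set_mset T) = blk (restr Z (set_mset B))"
  using assms
proof (induction Z)
  case empty thus ?case by simp
next
  case (add x Z)
  have IH: "restr (blk Z) (set_mset S) = blk (restr Z (set_mset A))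
       \<and> restr (blk Z) (set_mset T) = blk (restr Z (set_mset B))"
    by (rule add.IH) (use add.prems in \<open>auto simp del: set_image_mset\<close>)
  have dec: "add_mset x Z = {#x#} + Z" by simp
  show ?case
  proof (cases "x \<in># A")
    case True
    hence "d x \<in># \<pi>" using f4 by blast
    hence sub: "set_mset (d x) \<subseteq> set_mset S" using f1 by blast
    have rd: "restr (d x) (set_mset S) = d x" "restr (d x) (set_mset T) = {#}"
      using sub disj by (blast intro: restr_id restr_none)+
    have "x \<in> set_mset A" "x \<notin> set_mset B" using True f5 by blast+
    hence e1: "restr (add_mset x Z) (set_mset A) = add_mset x (restr Z (set_mset A))"
      and e2: "restr (add_mset x Z) (set_mset B) = restr Z (set_mset B)"
      by (simp_all only: restr_add_mset if_True if_False)
    show ?thesis unfolding e1 e2 blk_add_mset restr_add rd using IH by (simp only: add_0_right add_0_left)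
  next
    case False
    hence xB: "x \<in># B" using add.prems by (auto simp del: set_image_mset)
    hence "d x \<in># \<tau>" using f4' by blast
    hence sub: "set_mset (d x) \<subseteq> set_mset T" using f1' by blast
    have rd: "restr (d x) (set_mset S) = {#}" "restr (d x) (set_mset T) = d x"
      using sub disj by (blast intro: restr_id restr_none)+
    have "x \<notin> set_mset A" "x \<in> set_mset B" using False xB by blast+
    hence e1: "restr (add_mset x Z) (set_mset A) = restr Z (set_mset A)"
      and e2: "restr (add_mset x Z) (set_mset B) = add_mset x (restr Z (set_mset B))"
      by (simp_all only: restr_add_mset if_True if_False)
    show ?thesis unfolding e1 e2 blk_add_mset restr_add rd using IH by (simp only: add_0_right add_0_left)
  qed
qed

lemma K3:
  assumes "set_mset X \<subseteq> set_mset A \<union> set_mset B"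
  shows "blk X = {#} \<longleftrightarrow> X = {#}"
proof
  assume "blk X = {#}"
  hence "\<forall>x\<in>#X. d x = {#}" by (simp add: blk_def)
  moreover have "\<forall>x\<in>#X. d x \<noteq> {#}"
  proof
    fix x assume "x \<in># X"
    hence "x \<in># A \<or> x \<in># B" using assms by blast
    thus "d x \<noteq> {#}"
    proof
      assume "x \<in># A" hence "d x \<in># \<pi>" using f4 by blast
      thus ?thesis using f1 by blast
    next
      assume "x \<in># B" hence "d x \<in># \<tau>" using f4' by blast
      thus ?thesis using f1' by blast
    qed
  qed
  ultimately show "X = {#}" by (cases X) auto
qed simp

end


context flat begin

lemma zchar:
  assumes "\<zeta> \<in> sharp A B (sing A) (sing B)" "Z \<in># \<zeta>"
  shows "set_mset Z \<subseteq> set_mset A \<union> set_mset B" "Z \<noteq> {#}"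
    "Z = restr Z (set_mset A) + restr Z (set_mset B)"
    "restr Z (set_mset A) = {#} \<or> (\<exists>a. a \<in># A \<and> restr Z (set_mset A) = {#a#})"
    "restr Z (set_mset B) = {#} \<or> (\<exists>a. a \<in># B \<and> restr Z (set_mset B) = {#a#})"
proof -
  have mp: "\<zeta> \<in> mset_partitions (A + B)" using assms(1) by (rule sharp_mp)
  have "Z \<subseteq># A + B" using block_le[OF mp assms(2)] .
  hence "set_mset Z \<subseteq> set_mset (A + B)" by (rule set_mset_mono)
  thus s: "set_mset Z \<subseteq> set_mset A \<union> set_mset B" by simp
  show "Z \<noteq> {#}" using block_ne[OF mp assms(2)] .
  show "Z = restr Z (set_mset A) + restr Z (set_mset B)" by (rule restr_split[OF s f5])
  have rA: "restr_part \<zeta> (set_mset A) = sing A" and rB: "restr_part \<zeta> (set_mset B) = sing B"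
    using assms(1) by (simp_all add: sharp_def)
  show "restr Z (set_mset A) = {#} \<or> (\<exists>a. a \<in># A \<and> restr Z (set_mset A) = {#a#})"
  proof (cases "restr Z (set_mset A) = {#}")
    case False
    hence m: "restr Z (set_mset A) \<in># sing A" by (rule restr_part_mem[OF rA assms(2)])
    have "restr Z (set_mset A) \<in> (\<lambda>x. {#x#}) ` set_mset A" using m by (simp only: sing_def in_image_mset)
    then obtain a where "a \<in> set_mset A" "restr Z (set_mset A) = {#a#}" by (rule imageE) simp
    thus ?thesis by blast
  qed simp
  show "restr Z (set_mset B) = {#} \<or> (\<exists>a. a \<in># B \<and> restr Z (set_mset B) = {#a#})"
  proof (cases "restr Z (set_mset B) = {#}")
    case False
    hence m: "restr Z (set_mset B) \<in># sing B" by (rule restr_part_mem[OF rB assms(2)])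
    have "restr Z (set_mset B) \<in> (\<lambda>x. {#x#}) ` set_mset B" using m by (simp only: sing_def in_image_mset)
    then obtain a where "a \<in> set_mset B" "restr Z (set_mset B) = {#a#}" by (rule imageE) simp
    thus ?thesis by blast
  qed simp
qed

lemma cchar:
  assumes "\<theta> \<in> sharp S T \<pi> \<tau>" "C \<in># \<theta>"
  shows "C \<noteq> {#}" "C = restr C (set_mset S) + restr C (set_mset T)"
    "restr C (set_mset S) \<noteq> {#} \<Longrightarrow> restr C (set_mset S) \<in># \<pi>"
    "restr C (set_mset T) \<noteq> {#} \<Longrightarrow> restr C (set_mset T) \<in># \<tau>"
proof -
  have mp: "\<theta> \<in> mset_partitions (S + T)" using assms(1) by (rule sharp_mp)
  have "C \<subseteq># S + T" using block_le[OF mp assms(2)] .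
  hence "set_mset C \<subseteq> set_mset (S + T)" by (rule set_mset_mono)
  hence s: "set_mset C \<subseteq> set_mset S \<union> set_mset T" by simp
  show "C \<noteq> {#}" using block_ne[OF mp assms(2)] .
  show "C = restr C (set_mset S) + restr C (set_mset T)" by (rule restr_split[OF s disj])
  have rS: "restr_part \<theta> (set_mset S) = \<pi>" and rT: "restr_part \<theta> (set_mset T) = \<tau>"
    using assms(1) by (simp_all add: sharp_def)
  show "restr C (set_mset S) \<noteq> {#} \<Longrightarrow> restr C (set_mset S) \<in># \<pi>"
    using restr_part_mem[OF rS assms(2)] by blast
  show "restr C (set_mset T) \<noteq> {#} \<Longrightarrow> restr C (set_mset T) \<in># \<tau>"
    using restr_part_mem[OF rT assms(2)] by blast
qed

lemma blk_unb:
  assumes "\<theta> \<in> sharp S T \<pi> \<tau>" "C \<in># \<theta>"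
  shows "blk (unb C) = C"
proof -
  have "blk (oneS C) = restr C (set_mset S)"
  proof (cases "restr C (set_mset S) = {#}")
    case False
    hence "restr C (set_mset S) \<in># \<pi>" using cchar(3)[OF assms] by blast
    hence "d (c (restr C (set_mset S))) = restr C (set_mset S)" by (simp add: f3)
    thus ?thesis using False by (simp add: oneS_def)
  qed (simp add: oneS_def)
  moreover have "blk (oneT C) = restr C (set_mset T)"
  proof (cases "restr C (set_mset T) = {#}")
    case False
    hence "restr C (set_mset T) \<in># \<tau>" using cchar(4)[OF assms] by blast
    hence "d (c (restr C (set_mset T))) = restr C (set_mset T)" by (simp add: f3)
    thus ?thesis using False by (simp add: oneT_def)
  qed (simp add: oneT_def)
  ultimately show ?thesis using cchar(2)[OF assms] by (simp add: unb_def)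
qed

lemma unb_blk:
  assumes "\<zeta> \<in> sharp A B (sing A) (sing B)" "Z \<in># \<zeta>"
  shows "unb (blk Z) = Z"
proof -
  note K = K2[OF zchar(1)[OF assms]]
  have "oneS (blk Z) = restr Z (set_mset A)"
    using zchar(4)[OF assms]
  proof
    assume e: "restr Z (set_mset A) = {#}"
    thus ?thesis using K by (simp add: oneS_def)
  next
    assume "\<exists>a. a \<in># A \<and> restr Z (set_mset A) = {#a#}"
    then obtain a where a: "a \<in># A" "restr Z (set_mset A) = {#a#}" by blast
    have "d a \<in># \<pi>" by (rule conjunct1[OF f4[OF a(1)]])
    have "c (d a) = a" by (rule conjunct2[OF f4[OF a(1)]])
    note \<open>d a \<in># \<pi>\<close>
    hence "d a \<noteq> {#}" by (rule conjunct1[OF f1])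
    thus ?thesis using K a \<open>c (d a) = a\<close> by (simp add: oneS_def)
  qed
  moreover have "oneT (blk Z) = restr Z (set_mset B)"
    using zchar(5)[OF assms]
  proof
    assume e: "restr Z (set_mset B) = {#}"
    thus ?thesis using K by (simp add: oneT_def)
  next
    assume "\<exists>a. a \<in># B \<and> restr Z (set_mset B) = {#a#}"
    then obtain a where a: "a \<in># B" "restr Z (set_mset B) = {#a#}" by blast
    have "d a \<in># \<tau>" by (rule conjunct1[OF f4'[OF a(1)]])
    have "c (d a) = a" by (rule conjunct2[OF f4'[OF a(1)]])
    note \<open>d a \<in># \<tau>\<close>
    hence "d a \<noteq> {#}" by (rule conjunct1[OF f1'])
    thus ?thesis using K a \<open>c (d a) = a\<close> by (simp add: oneT_def)
  qed
  ultimately show ?thesis using zchar(3)[OF assms] by (simp add: unb_def)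
qed

end


context flat begin

lemma blk_sum: "blk (sum_mset \<zeta>) = sum_mset (image_mset blk \<zeta>)"
  by (induction \<zeta>) auto

lemma blk_cod: "blk (image_mset c \<pi>) = S" "blk (image_mset c \<tau>) = T"
proof -
  have "blk (image_mset c \<pi>) = sum_mset (image_mset (\<lambda>X. d (c X)) \<pi>)"
    by (simp add: blk_def multiset.map_comp comp_def)
  also have "image_mset (\<lambda>X. d (c X)) \<pi> = image_mset id \<pi>"
    by (rule image_mset_cong) (simp add: f3)
  finally show "blk (image_mset c \<pi>) = S" using pS by (simp add: mset_partitions_def is_mset_partition_def)
  have "blk (image_mset c \<tau>) = sum_mset (image_mset (\<lambda>X. d (c X)) \<tau>)"
    by (simp add: blk_def multiset.map_comp comp_def)
  also have "image_mset (\<lambda>X. d (c X)) \<tau> = image_mset id \<tau>"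
    by (rule image_mset_cong) (simp add: f3)
  finally show "blk (image_mset c \<tau>) = T" using pT by (simp add: mset_partitions_def is_mset_partition_def)
qed

lemma blk_sing: "image_mset blk (sing A) = \<pi>" "image_mset blk (sing B) = \<tau>"
proof -
  have "image_mset blk (sing A) = image_mset (\<lambda>X. d (c X)) \<pi>"
    by (simp add: sing_def multiset.map_comp comp_def)
  also have "\<dots> = image_mset id \<pi>" by (rule image_mset_cong) (simp add: f3)
  finally show "image_mset blk (sing A) = \<pi>" by simp
  have "image_mset blk (sing B) = image_mset (\<lambda>X. d (c X)) \<tau>"
    by (simp add: sing_def multiset.map_comp comp_def)
  also have "\<dots> = image_mset id \<tau>" by (rule image_mset_cong) (simp add: f3)
  finally show "image_mset blk (sing B) = \<tau>" by simp
qed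

lemma Phi_restr:
  assumes z: "\<zeta> \<in> sharp A B (sing A) (sing B)"
  shows "restr_part (image_mset blk \<zeta>) (set_mset S) = \<pi>"
    "restr_part (image_mset blk \<zeta>) (set_mset T) = \<tau>"
proof -
  have rA: "restr_part \<zeta> (set_mset A) = sing A" and rB: "restr_part \<zeta> (set_mset B) = sing B"
    using z by (simp_all add: sharp_def)
  have "restr_part (image_mset blk \<zeta>) (set_mset S)
      = filter_mset (\<lambda>X. X \<noteq> {#}) (image_mset (\<lambda>Z. restr (blk Z) (set_mset S)) \<zeta>)"
    by (simp add: restr_part_def multiset.map_comp comp_def)
  also have "image_mset (\<lambda>Z. restr (blk Z) (set_mset S)) \<zeta>
      = image_mset blk (image_mset (\<lambda>Z. restr Z (set_mset A)) \<zeta>)"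
    unfolding multiset.map_comp comp_def
    by (rule image_mset_cong) (use K2[OF zchar(1)[OF z]] in blast)
  also have "filter_mset (\<lambda>X. X \<noteq> {#}) (image_mset blk (image_mset (\<lambda>Z. restr Z (set_mset A)) \<zeta>))
      = image_mset blk (filter_mset (\<lambda>X. blk X \<noteq> {#}) (image_mset (\<lambda>Z. restr Z (set_mset A)) \<zeta>))"
    by (rule filter_mset_image_mset)
  also have "filter_mset (\<lambda>X. blk X \<noteq> {#}) (image_mset (\<lambda>Z. restr Z (set_mset A)) \<zeta>)
      = filter_mset (\<lambda>X. X \<noteq> {#}) (image_mset (\<lambda>Z. restr Z (set_mset A)) \<zeta>)"
  proof (rule filter_mset_cong[OF refl])
    fix X assume "X \<in># image_mset (\<lambda>Z. restr Z (set_mset A)) \<zeta>"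
    then obtain Z where XZ: "X = restr Z (set_mset A)" by auto
    have "set_mset X \<subseteq> set_mset A" unfolding XZ by (rule restr_subset)
    hence sub: "set_mset X \<subseteq> set_mset A \<union> set_mset B" by blast
    show "(blk X \<noteq> {#}) = (X \<noteq> {#})" using K3[OF sub] by simp
  qed
  also have "\<dots> = sing A" using rA by (simp add: restr_part_def)
  finally show "restr_part (image_mset blk \<zeta>) (set_mset S) = \<pi>" using blk_sing by simp
  have "restr_part (image_mset blk \<zeta>) (set_mset T)
      = filter_mset (\<lambda>X. X \<noteq> {#}) (image_mset (\<lambda>Z. restr (blk Z) (set_mset T)) \<zeta>)"
    by (simp add: restr_part_def multiset.map_comp comp_def)
  also have "image_mset (\<lambda>Z. restr (blk Z) (set_mset T)) \<zeta>
      = image_mset blk (image_mset (\<lambda>Z. restr Z (set_mset B)) \<zeta>)"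
    unfolding multiset.map_comp comp_def
    by (rule image_mset_cong) (use K2[OF zchar(1)[OF z]] in blast)
  also have "filter_mset (\<lambda>X. X \<noteq> {#}) (image_mset blk (image_mset (\<lambda>Z. restr Z (set_mset B)) \<zeta>))
      = image_mset blk (filter_mset (\<lambda>X. blk X \<noteq> {#}) (image_mset (\<lambda>Z. restr Z (set_mset B)) \<zeta>))"
    by (rule filter_mset_image_mset)
  also have "filter_mset (\<lambda>X. blk X \<noteq> {#}) (image_mset (\<lambda>Z. restr Z (set_mset B)) \<zeta>)
      = filter_mset (\<lambda>X. X \<noteq> {#}) (image_mset (\<lambda>Z. restr Z (set_mset B)) \<zeta>)"
  proof (rule filter_mset_cong[OF refl])
    fix X assume "X \<in># image_mset (\<lambda>Z. restr Z (set_mset B)) \<zeta>"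
    then obtain Z where XZ: "X = restr Z (set_mset B)" by auto
    have "set_mset X \<subseteq> set_mset B" unfolding XZ by (rule restr_subset)
    hence sub: "set_mset X \<subseteq> set_mset A \<union> set_mset B" by blast
    show "(blk X \<noteq> {#}) = (X \<noteq> {#})" using K3[OF sub] by simp
  qed
  also have "\<dots> = sing B" using rB by (simp add: restr_part_def)
  finally show "restr_part (image_mset blk \<zeta>) (set_mset T) = \<tau>" using blk_sing by simp
qed

lemma Phi_into:
  assumes z: "\<zeta> \<in> sharp A B (sing A) (sing B)"
  shows "image_mset blk \<zeta> \<in> sharp S T \<pi> \<tau>"
proof -
  have s: "sum_mset \<zeta> = A + B" using z by (simp add: sharp_def is_mset_partition_def)
  have "sum_mset (image_mset blk \<zeta>) = S + T"
    using s blk_cod by (simp flip: blk_sum)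
  moreover have "\<forall>C\<in>#image_mset blk \<zeta>. C \<noteq> {#}"
  proof
    fix C assume "C \<in># image_mset blk \<zeta>"
    then obtain Z where Z: "Z \<in># \<zeta>" "C = blk Z" by auto
    show "C \<noteq> {#}" using K3[OF zchar(1)[OF z Z(1)]] zchar(2)[OF z Z(1)] Z(2) by simp
  qed
  ultimately show ?thesis using Phi_restr[OF z] by (simp add: sharp_def is_mset_partition_def)
qed

end


context flat begin

definition "gS X = (if X = {#} then {#} else {#c X#})"

lemma oneS_g: "oneS C = gS (restr C (set_mset S))" and oneT_g: "oneT C = gS (restr C (set_mset T))"
  by (simp_all add: oneS_def oneT_def gS_def)

lemma gS_empty: "(gS X = {#}) = (X = {#})"
  by (simp add: gS_def)

lemma filter_gS:
  "filter_mset (\<lambda>X. X \<noteq> {#}) (image_mset gS M) = image_mset gS (filter_mset (\<lambda>X. X \<noteq> {#}) M)"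
  by (simp add: filter_mset_image_mset gS_empty)

lemma gS_pi: "image_mset gS \<pi> = sing A" "image_mset gS \<tau> = sing B"
proof -
  have "image_mset gS \<pi> = image_mset (\<lambda>X. {#c X#}) \<pi>"
    by (rule image_mset_cong) (use f1 in \<open>auto simp: gS_def\<close>)
  thus "image_mset gS \<pi> = sing A" by (simp add: sing_def multiset.map_comp comp_def)
  have "image_mset gS \<tau> = image_mset (\<lambda>X. {#c X#}) \<tau>"
    by (rule image_mset_cong) (use f1' in \<open>auto simp: gS_def\<close>)
  thus "image_mset gS \<tau> = sing B" by (simp add: sing_def multiset.map_comp comp_def)
qed

lemma filter_one:
  assumes t: "\<theta> \<in> sharp S T \<pi> \<tau>"
  shows "filter_mset (\<lambda>X. X \<noteq> {#}) (image_mset oneS \<theta>) = sing A"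
    "filter_mset (\<lambda>X. X \<noteq> {#}) (image_mset oneT \<theta>) = sing B"
proof -
  have rS: "restr_part \<theta> (set_mset S) = \<pi>" and rT: "restr_part \<theta> (set_mset T) = \<tau>"
    using t by (simp_all add: sharp_def)
  have "image_mset oneS \<theta> = image_mset gS (image_mset (\<lambda>C. restr C (set_mset S)) \<theta>)"
    unfolding multiset.map_comp comp_def by (rule image_mset_cong) (simp add: oneS_g)
  thus "filter_mset (\<lambda>X. X \<noteq> {#}) (image_mset oneS \<theta>) = sing A"
    using rS gS_pi by (simp add: filter_gS restr_part_def)
  have "image_mset oneT \<theta> = image_mset gS (image_mset (\<lambda>C. restr C (set_mset T)) \<theta>)"
    unfolding multiset.map_comp comp_def by (rule image_mset_cong) (simp add: oneT_g)
  thus "filter_mset (\<lambda>X. X \<noteq> {#}) (image_mset oneT \<theta>) = sing B"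
    using rT gS_pi by (simp add: filter_gS restr_part_def)
qed

lemma one_sets:
  assumes t: "\<theta> \<in> sharp S T \<pi> \<tau>" and C: "C \<in># \<theta>"
  shows "set_mset (oneS C) \<subseteq> set_mset A" "set_mset (oneT C) \<subseteq> set_mset B"
proof -
  show "set_mset (oneS C) \<subseteq> set_mset A"
  proof (cases "restr C (set_mset S) = {#}")
    case False
    hence "restr C (set_mset S) \<in># \<pi>" by (rule cchar(3)[OF t C])
    thus ?thesis using False by (simp add: oneS_def)
  qed (simp add: oneS_def)
  show "set_mset (oneT C) \<subseteq> set_mset B"
  proof (cases "restr C (set_mset T) = {#}")
    case False
    hence "restr C (set_mset T) \<in># \<tau>" by (rule cchar(4)[OF t C])
    thus ?thesis using False by (simp add: oneT_def)
  qed (simp add: oneT_def)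
qed

lemma restr_unb:
  assumes t: "\<theta> \<in> sharp S T \<pi> \<tau>" and C: "C \<in># \<theta>"
  shows "restr (unb C) (set_mset A) = oneS C" "restr (unb C) (set_mset B) = oneT C"
proof -
  note o = one_sets[OF t C]
  have d1: "set_mset (oneT C) \<inter> set_mset A = {}" using o(2) f5 by blast
  have d2: "set_mset (oneS C) \<inter> set_mset B = {}" using o(1) f5 by blast
  show "restr (unb C) (set_mset A) = oneS C"
    unfolding unb_def restr_add restr_id[OF o(1)] restr_none[OF d1] by simp
  show "restr (unb C) (set_mset B) = oneT C"
    unfolding unb_def restr_add restr_id[OF o(2)] restr_none[OF d2] by simp
qed

lemma Psi_into:
  assumes t: "\<theta> \<in> sharp S T \<pi> \<tau>"
  shows "image_mset unb \<theta> \<in> sharp A B (sing A) (sing B)"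
proof -
  have rA: "restr_part (image_mset unb \<theta>) (set_mset A) = sing A"
  proof -
    have "image_mset (\<lambda>C. restr (unb C) (set_mset A)) \<theta> = image_mset oneS \<theta>"
      by (rule image_mset_cong) (rule restr_unb(1)[OF t])
    thus ?thesis using filter_one(1)[OF t]
      by (simp add: restr_part_def multiset.map_comp comp_def)
  qed
  have rB: "restr_part (image_mset unb \<theta>) (set_mset B) = sing B"
  proof -
    have "image_mset (\<lambda>C. restr (unb C) (set_mset B)) \<theta> = image_mset oneT \<theta>"
      by (rule image_mset_cong) (rule restr_unb(2)[OF t])
    thus ?thesis using filter_one(2)[OF t]
      by (simp add: restr_part_def multiset.map_comp comp_def)
  qed
  have "sum_mset (image_mset unb \<theta>) = sum_mset (image_mset oneS \<theta>) + sum_mset (image_mset oneT \<theta>)"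
  proof -
    have "image_mset unb \<theta> = image_mset (\<lambda>C. oneS C + oneT C) \<theta>"
      by (rule image_mset_cong) (simp add: unb_def)
    thus ?thesis by (simp only: sum_mset.distrib)
  qed
  also have "\<dots> = sum_mset (sing A) + sum_mset (sing B)"
    using filter_one[OF t] sum_filter_nonempty by metis
  also have "\<dots> = A + B" by (simp add: sing_def)
  finally have s: "sum_mset (image_mset unb \<theta>) = A + B" .
  have ne: "\<forall>Z\<in>#image_mset unb \<theta>. Z \<noteq> {#}"
  proof
    fix Z assume "Z \<in># image_mset unb \<theta>"
    then obtain C where C: "C \<in># \<theta>" "Z = unb C" by auto
    show "Z \<noteq> {#}"
    proof
      assume "Z = {#}"
      hence "oneS C = {#}" "oneT C = {#}" using C(2) by (simp_all add: unb_def)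
      hence "restr C (set_mset S) = {#}" "restr C (set_mset T) = {#}"
        by (simp_all add: oneS_g oneT_g gS_empty)
      hence "C = {#}" using cchar(2)[OF t C(1)] by simp
      thus False using cchar(1)[OF t C(1)] by simp
    qed
  qed
  show ?thesis unfolding sharp_def is_mset_partition_def mem_Collect_eq
    using rA rB s ne by blast
qed

lemma flat_sum:
  "(\<Sum>\<zeta>\<in>sharp A B (sing A) (sing B). ht (mtilde \<zeta>)) = (\<Sum>\<theta>\<in>sharp S T \<pi> \<tau>. ht (mtilde \<theta>))"
proof -
  have bij: "bij_betw (image_mset blk) (sharp A B (sing A) (sing B)) (sharp S T \<pi> \<tau>)"
  proof (rule bij_betw_byWitness[where f'="image_mset unb"])
    show "\<forall>\<zeta>\<in>sharp A B (sing A) (sing B). image_mset unb (image_mset blk \<zeta>) = \<zeta>"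
    proof
      fix \<zeta> assume z: "\<zeta> \<in> sharp A B (sing A) (sing B)"
      have "image_mset unb (image_mset blk \<zeta>) = image_mset id \<zeta>"
        unfolding multiset.map_comp by (rule image_mset_cong) (simp add: unb_blk[OF z])
      thus "image_mset unb (image_mset blk \<zeta>) = \<zeta>" by simp
    qed
    show "\<forall>\<theta>\<in>sharp S T \<pi> \<tau>. image_mset blk (image_mset unb \<theta>) = \<theta>"
    proof
      fix \<theta> assume t: "\<theta> \<in> sharp S T \<pi> \<tau>"
      have "image_mset blk (image_mset unb \<theta>) = image_mset id \<theta>"
        unfolding multiset.map_comp by (rule image_mset_cong) (simp add: blk_unb[OF t])
      thus "image_mset blk (image_mset unb \<theta>) = \<theta>" by simp
    qed
    show "image_mset blk ` sharp A B (sing A) (sing B) \<subseteq> sharp S T \<pi> \<tau>"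
      using Phi_into by blast
    show "image_mset unb ` sharp S T \<pi> \<tau> \<subseteq> sharp A B (sing A) (sing B)"
      using Psi_into by blast
  qed
  have mt: "mtilde (image_mset blk \<zeta>) = mtilde \<zeta>" if z: "\<zeta> \<in> sharp A B (sing A) (sing B)" for \<zeta>
  proof (rule mtilde_image, rule inj_onI)
    fix Z1 Z2 assume "Z1 \<in># \<zeta>" "Z2 \<in># \<zeta>" "blk Z1 = blk Z2"
    thus "Z1 = Z2" using unb_blk[OF z] by metis
  qed
  have "(\<Sum>\<zeta>\<in>sharp A B (sing A) (sing B). ht (mtilde \<zeta>))
      = (\<Sum>\<zeta>\<in>sharp A B (sing A) (sing B). ht (mtilde (image_mset blk \<zeta>)))"
    by (rule sum.cong) (simp_all add: mt)
  also have "\<dots> = (\<Sum>\<theta>\<in>sharp S T \<pi> \<tau>. ht (mtilde \<theta>))"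
    by (rule sum.reindex_bij_betw[OF bij])
  finally show ?thesis .
qed

lemma mt_sing: "mtilde (sing A) = mtilde \<pi>" "mtilde (sing B) = mtilde \<tau>"
proof -
  have "sing A = image_mset (\<lambda>X. {#c X#}) \<pi>" by (simp add: sing_def multiset.map_comp comp_def)
  moreover have "inj_on (\<lambda>X. {#c X#}) (set_mset \<pi>)"
    by (rule inj_onI) (use cinj in \<open>auto dest: inj_onD\<close>)
  ultimately show "mtilde (sing A) = mtilde \<pi>" by (simp add: mtilde_image)
  have "sing B = image_mset (\<lambda>X. {#c X#}) \<tau>" by (simp add: sing_def multiset.map_comp comp_def)
  moreover have "inj_on (\<lambda>X. {#c X#}) (set_mset \<tau>)"
    by (rule inj_onI) (use cinj in \<open>auto dest: inj_onD\<close>)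
  ultimately show "mtilde (sing B) = mtilde \<tau>" by (simp add: mtilde_image)
qed

end


definition Q :: "(nat multiset \<Rightarrow> sym) \<Rightarrow> nat multiset multiset \<Rightarrow> nat multiset multiset \<Rightarrow> bool" where
  "Q ht \<rho> \<kappa> \<longleftrightarrow> (\<forall>X Y. set_mset X \<inter> set_mset Y = {} \<longrightarrow> \<rho> \<in> mset_partitions X \<longrightarrow> \<kappa> \<in> mset_partitions Y
      \<longrightarrow> ht (mtilde \<rho>) * ht (mtilde \<kappa>) = (\<Sum>\<theta>\<in>sharp X Y \<rho> \<kappa>. ht (mtilde \<theta>)))"

lemma step:
  fixes S T :: "'a multiset" and \<pi> \<tau> :: "'a multiset multiset"
  defines "c \<equiv> to_nat_on (set_mset \<pi> \<union> set_mset \<tau>)"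
  assumes ht: "is_htilde ht"
    and disj: "set_mset S \<inter> set_mset T = {}"
    and pS: "\<pi> \<in> mset_partitions S" and pT: "\<tau> \<in> mset_partitions T"
    and IH: "\<And>\<rho> \<kappa>. \<rho> \<in> mset_partitions (image_mset c \<pi>) \<Longrightarrow> \<kappa> \<in> mset_partitions (image_mset c \<tau>)
       \<Longrightarrow> (\<rho>, \<kappa>) \<noteq> (sing (image_mset c \<pi>), sing (image_mset c \<tau>)) \<Longrightarrow> Q ht \<rho> \<kappa>"
  shows "ht (mtilde \<pi>) * ht (mtilde \<tau>) = (\<Sum>\<theta>\<in>sharp S T \<pi> \<tau>. ht (mtilde \<theta>))"
proof -
  have cinj: "inj_on c (set_mset \<pi> \<union> set_mset \<tau>)" unfolding c_def
    by (rule inj_on_to_nat_on) (simp add: countable_finite)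
  interpret flat S T \<pi> \<tau> c by unfold_locales (fact disj pS pT cinj)+
  let ?M = "mset_partitions A \<times> mset_partitions B"
  let ?f = "\<lambda>p. ht (mtilde (fst p)) * ht (mtilde (snd p))"
  let ?g = "\<lambda>p. \<Sum>\<zeta>\<in>sharp A B (fst p) (snd p). ht (mtilde \<zeta>)"
  let ?p0 = "(sing A, sing B)"
  have eq: "sum ?f ?M = sum ?g ?M"
    using F_prod[of ht A B] F_add[OF ht f5] F_decomp[OF f5, of ht] by simp
  have fin: "finite ?M" by (simp add: finite_mset_partitions)
  have p0: "?p0 \<in> ?M" by (simp add: sing_mp)
  have rest: "sum ?f (?M - {?p0}) = sum ?g (?M - {?p0})"
  proof (rule sum.cong[OF refl])
    fix p assume p: "p \<in> ?M - {?p0}"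
    obtain \<rho> \<kappa> where pp: "p = (\<rho>, \<kappa>)" by fastforce
    have "Q ht \<rho> \<kappa>" using p pp by (intro IH) auto
    thus "?f p = ?g p" using p pp f5 by (simp add: Q_def)
  qed
  have "?f ?p0 + sum ?f (?M - {?p0}) = ?g ?p0 + sum ?g (?M - {?p0})"
    using eq sum.remove[OF fin p0, of ?f] sum.remove[OF fin p0, of ?g] by simp
  hence "?f ?p0 = ?g ?p0" using rest by simp
  thus ?thesis using mt_sing flat_sum by simp
qed

lemma core:
  assumes ht: "is_htilde ht"
  shows "Q ht \<rho> \<kappa>"
proof (induction "size \<rho> + size \<kappa>" arbitrary: \<rho> \<kappa> rule: less_induct)
  case less
  show ?case unfolding Q_def
  proof (intro allI impI)
    fix X Y :: "nat multiset"
    assume d: "set_mset X \<inter> set_mset Y = {}" and r: "\<rho> \<in> mset_partitions X" and k: "\<kappa> \<in> mset_partitions Y"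
    show "ht (mtilde \<rho>) * ht (mtilde \<kappa>) = (\<Sum>\<theta>\<in>sharp X Y \<rho> \<kappa>. ht (mtilde \<theta>))"
    proof (rule step[OF ht d r k])
      fix \<rho>' \<kappa>'
      let ?c = "to_nat_on (set_mset \<rho> \<union> set_mset \<kappa>)"
      assume r': "\<rho>' \<in> mset_partitions (image_mset ?c \<rho>)" and k': "\<kappa>' \<in> mset_partitions (image_mset ?c \<kappa>)"
        and ne: "(\<rho>', \<kappa>') \<noteq> (sing (image_mset ?c \<rho>), sing (image_mset ?c \<kappa>))"
      have "size \<rho>' \<le> size \<rho>" using size_mp(1)[OF r'] by simp
      moreover have "size \<kappa>' \<le> size \<kappa>" using size_mp(1)[OF k'] by simp
      moreover have "\<not> (size \<rho>' = size \<rho> \<and> size \<kappa>' = size \<kappa>)"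
        using size_mp(2)[OF r'] size_mp(2)[OF k'] ne by auto
      ultimately have "size \<rho>' + size \<kappa>' < size \<rho> + size \<kappa>" by linarith
      thus "Q ht \<rho>' \<kappa>'" by (rule less)
    qed
  qed
qed

theorem proposition21:
  fixes S T :: "'a multiset" and \<pi> \<tau> :: "'a multiset multiset"
    and ht :: "nat multiset \<Rightarrow> sym"
  assumes "is_htilde ht"
    and "set_mset S \<inter> set_mset T = {}"
    and "is_mset_partition \<pi> S"
    and "is_mset_partition \<tau> T"
  shows "ht (mtilde \<pi>) * ht (mtilde \<tau>) = (\<Sum>\<theta>\<in>sharp S T \<pi> \<tau>. ht (mtilde \<theta>))"
  by (rule step[OF assms(1,2)]) (use assms(3,4) core[OF assms(1)] in \<open>simp_all add: mset_partitions_def\<close>)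


end
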